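(* For every weak composition $a$ of length $n$, \[\mathfrak{Q}_a=\sum_{\substack{b\ge a\\ \mathrm{flat}(b)=\mathrm{flat}(a)}}\mathfrak{Q}^{(1)}_b,\] where $b$ ranges over weak compositions of length $n$.
   Context: Weak composition of length $n$: sequence of $n$ nonnegative integers; $\mathrm{flat}(a)$ deletes zero parts; $b\ge a$ means $b_1+\cdots+b_i\ge a_1+\cdots+a_i$ for all $i$. $D(a)$: $a_i$ left-justified boxes in row $i$, row 1 lowest. Quasi-key tableau of shape $a$: filling of $D(a)$ with positive integers such that (1) entries weakly decrease along rows and no entry of row $i$ exceeds $i$; (2) column entries distinct and increasing going up the first column; (3) if an entry $i$ is above an entry $k$ in the same column with $i<k$, there is an entry $j$ immediately right of $k$ with $i<j$; (4) for two rows with the higher strictly longer, an entry $i$ in column $c$ of the lower row and $j$ in column $c+1$ of the higher row satisfy $i<j$. $\mathfrak{Q}_a=\sum_T\prod_ix_i^{\#\{\text{entries } i \text{ in } T\}}$ over quasi-key tableaux of shape $a$; $\mathfrak{Q}^{(1)}_a$ is the same sum restricted to quasi-key tableaux whose first-column entries equal their row indices. *)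

theory Defs
  imports Main
begin

text \<open>A weak composition of length n is a list a of naturals with length a = n.
  Rows are indexed 1..n (row 1 lowest); row r has a!(r-1) boxes in columns 1..a!(r-1).\<close>

definition row_len :: "nat list \<Rightarrow> nat \<Rightarrow> nat" where
  "row_len a r = (if 1 \<le> r \<and> r \<le> length a then a ! (r - 1) else 0)"

definition diagram :: "nat list \<Rightarrow> (nat \<times> nat) set" where
  "diagram a = {(r, c). 1 \<le> r \<and> r \<le> length a \<and> 1 \<le> c \<and> c \<le> row_len a r}"

definition flat :: "nat list \<Rightarrow> nat list" where
  "flat a = filter (\<lambda>x. x \<noteq> 0) a"

definition dominates :: "nat list \<Rightarrow> nat list \<Rightarrow> bool" where
  "dominates b a \<longleftrightarrow> (\<forall>i \<le> length a. sum_list (take i a) \<le> sum_list (take i b))"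

definition quasi_key :: "nat list \<Rightarrow> (nat \<Rightarrow> nat \<Rightarrow> nat) \<Rightarrow> bool" where
  "quasi_key a T \<longleftrightarrow>
     (\<forall>r c. (r, c) \<notin> diagram a \<longrightarrow> T r c = 0) \<and>
     (\<forall>(r, c) \<in> diagram a. 0 < T r c) \<and>
     \<comment> \<open>(1) rows weakly decrease, entries of row r at most r\<close>
     (\<forall>r c c'. (r, c) \<in> diagram a \<and> (r, c') \<in> diagram a \<and> c < c' \<longrightarrow> T r c' \<le> T r c) \<and>
     (\<forall>(r, c) \<in> diagram a. T r c \<le> r) \<and>
     \<comment> \<open>(2) column entries distinct, first column increasing upwards\<close>
     (\<forall>r r' c. (r, c) \<in> diagram a \<and> (r', c) \<in> diagram a \<and> r \<noteq> r' \<longrightarrow> T r c \<noteq> T r' c) \<and>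
     (\<forall>r r'. (r, 1) \<in> diagram a \<and> (r', 1) \<in> diagram a \<and> r < r' \<longrightarrow> T r 1 < T r' 1) \<and>
     \<comment> \<open>(3) entry i at (r',c) above entry k at (r,c) with i < k: entry j right of k with i < j\<close>
     (\<forall>r r' c. (r, c) \<in> diagram a \<and> (r', c) \<in> diagram a \<and> r < r' \<and> T r' c < T r c \<longrightarrow>
        (r, c + 1) \<in> diagram a \<and> T r' c < T r (c + 1)) \<and>
     \<comment> \<open>(4) higher row strictly longer: entry at (r,c) less than entry at (r',c+1)\<close>
     (\<forall>r r' c. r < r' \<and> row_len a r < row_len a r' \<and> (r, c) \<in> diagram a \<and> (r', c + 1) \<in> diagram a \<longrightarrow>
        T r c < T r' (c + 1))"

definition QKT :: "nat list \<Rightarrow> (nat \<Rightarrow> nat \<Rightarrow> nat) set" where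
  "QKT a = {T. quasi_key a T}"

definition QKT1 :: "nat list \<Rightarrow> (nat \<Rightarrow> nat \<Rightarrow> nat) set" where
  "QKT1 a = {T. quasi_key a T \<and> (\<forall>r. (r, 1) \<in> diagram a \<longrightarrow> T r 1 = r)}"

definition tab_weight :: "nat list \<Rightarrow> (nat \<Rightarrow> 'a::comm_semiring_1) \<Rightarrow> (nat \<Rightarrow> nat \<Rightarrow> nat) \<Rightarrow> 'a" where
  "tab_weight a x T = (\<Prod>i\<in>{1..length a}. x i ^ card {(r, c) \<in> diagram a. T r c = i})"

text \<open>Polynomials are represented by evaluation at an arbitrary point x in an arbitrary
  commutative semiring (equality for all such x is equality of polynomials).\<close>
definition Qpoly :: "nat list \<Rightarrow> (nat \<Rightarrow> 'a::comm_semiring_1) \<Rightarrow> 'a" where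
  "Qpoly a x = (\<Sum>T\<in>QKT a. tab_weight a x T)"

definition Qpoly1 :: "nat list \<Rightarrow> (nat \<Rightarrow> 'a::comm_semiring_1) \<Rightarrow> 'a" where
  "Qpoly1 a x = (\<Sum>T\<in>QKT1 a. tab_weight a x T)"

end

theory Submission
  imports Defs
begin


definition pos :: "nat list \<Rightarrow> nat list" where
  "pos a = filter (\<lambda>i. a ! i \<noteq> 0) [0..<length a]"

definition DD :: "nat list \<Rightarrow> (nat \<times> nat) set" where
  "DD v = {(k, c). k < length v \<and> 1 \<le> c \<and> c \<le> v ! k}"

lemma pos_sorted: "sorted_wrt (<) (pos a)"
  unfolding pos_def by (rule sorted_wrt_filter) simp

lemma set_pos: "set (pos a) = {i. i < length a \<and> a ! i \<noteq> 0}"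
  unfolding pos_def by auto

lemma map_pos: "map (nth a) (pos a) = flat a"
proof (induction a rule: rev_induct)
  case Nil thus ?case by (simp add: pos_def flat_def)
next
  case (snoc x xs)
  have "pos (xs @ [x]) = pos xs @ (if x \<noteq> 0 then [length xs] else [])"
    unfolding pos_def by (auto simp: nth_append intro!: filter_cong)
  moreover have "map (nth (xs @ [x])) (pos xs) = map (nth xs) (pos xs)"
    using set_pos[of xs] by (auto simp: nth_append)
  ultimately show ?case using snoc by (simp add: flat_def)
qed

lemma length_pos: "length (pos a) = length (flat a)"
  using arg_cong[OF map_pos[of a], of length] by simp

lemma flat_nth: "k < length (flat a) \<Longrightarrow> flat a ! k = a ! (pos a ! k)"
  using map_pos[of a] length_pos[of a] by (metis nth_map)

lemma pos_lt: "k < length (flat a) \<Longrightarrow> pos a ! k < length a"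
  using set_pos[of a] length_pos[of a] nth_mem by fastforce

lemma flat_pos: "k < length (flat a) \<Longrightarrow> 0 < flat a ! k"
  using set_pos[of a] length_pos[of a] nth_mem flat_nth by fastforce

lemma pos_less_iff:
  assumes "k < length (flat a)" "k' < length (flat a)"
  shows "pos a ! k < pos a ! k' \<longleftrightarrow> k < k'"
proof
  assume "k < k'" thus "pos a ! k < pos a ! k'"
    using sorted_wrt_nth_less[OF pos_sorted] assms length_pos by metis
next
  assume h: "pos a ! k < pos a ! k'"
  show "k < k'"
  proof (rule ccontr)
    assume "\<not> k < k'"
    hence "k' < k \<or> k' = k" by auto
    thus False using h sorted_wrt_nth_less[OF pos_sorted, of k' k a] assms length_pos by auto
  qed
qed

lemma pos_eq_iff:
  assumes "k < length (flat a)" "k' < length (flat a)"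
  shows "pos a ! k = pos a ! k' \<longleftrightarrow> k = k'"
  using pos_less_iff[OF assms] pos_less_iff[OF assms(2,1)] by (metis nat_neq_iff)

lemma row_len_pos: "k < length (flat a) \<Longrightarrow> row_len a (pos a ! k + 1) = flat a ! k"
  using pos_lt[of k a] flat_nth[of k a] by (simp add: row_len_def)

lemma diagram_iff:
  "(r, c) \<in> diagram a \<longleftrightarrow> (\<exists>k. (k, c) \<in> DD (flat a) \<and> r = pos a ! k + 1)"
proof
  assume "(r, c) \<in> diagram a"
  hence h: "1 \<le> r" "r \<le> length a" "1 \<le> c" "c \<le> a ! (r - 1)"
    by (auto simp: diagram_def row_len_def)
  hence "r - 1 \<in> set (pos a)" by (auto simp: set_pos)
  then obtain k where k: "k < length (pos a)" "pos a ! k = r - 1" by (auto simp: in_set_conv_nth)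
  show "\<exists>k. (k, c) \<in> DD (flat a) \<and> r = pos a ! k + 1"
    using k h flat_nth[of k a] length_pos[of a] by (intro exI[of _ k]) (auto simp: DD_def)
next
  assume "\<exists>k. (k, c) \<in> DD (flat a) \<and> r = pos a ! k + 1"
  then obtain k where "(k, c) \<in> DD (flat a)" "r = pos a ! k + 1" by blast
  thus "(r, c) \<in> diagram a"
    using pos_lt[of k a] row_len_pos[of k a] by (auto simp: DD_def diagram_def)
qed



definition Phi :: "nat list \<Rightarrow> (nat \<Rightarrow> nat \<Rightarrow> nat) \<Rightarrow> nat \<Rightarrow> nat \<Rightarrow> nat" where
  "Phi a T = (\<lambda>k c. if (k, c) \<in> DD (flat a) then T (pos a ! k + 1) c else 0)"

definition ZZ :: "nat list \<Rightarrow> (nat \<Rightarrow> nat \<Rightarrow> nat) \<Rightarrow> bool" where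
  "ZZ a T = (\<forall>r c. (r, c) \<notin> diagram a \<longrightarrow> T r c = 0)"

definition KK :: "nat list \<Rightarrow> (nat \<Rightarrow> nat \<Rightarrow> nat) \<Rightarrow> bool" where
  "KK v F \<longleftrightarrow>
    (\<forall>k c. (k, c) \<in> DD v \<longrightarrow> 0 < F k c) \<and>
    (\<forall>k c c'. (k, c) \<in> DD v \<and> (k, c') \<in> DD v \<and> c < c' \<longrightarrow> F k c' \<le> F k c) \<and>
    (\<forall>k k' c. (k, c) \<in> DD v \<and> (k', c) \<in> DD v \<and> k \<noteq> k' \<longrightarrow> F k c \<noteq> F k' c) \<and>
    (\<forall>k k'. (k, 1) \<in> DD v \<and> (k', 1) \<in> DD v \<and> k < k' \<longrightarrow> F k 1 < F k' 1) \<and>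
    (\<forall>k k' c. (k, c) \<in> DD v \<and> (k', c) \<in> DD v \<and> k < k' \<and> F k' c < F k c \<longrightarrow>
        (k, c + 1) \<in> DD v \<and> F k' c < F k (c + 1)) \<and>
    (\<forall>k k' c. k < k' \<and> v ! k < v ! k' \<and> (k, c) \<in> DD v \<and> (k', c + 1) \<in> DD v \<longrightarrow>
        F k c < F k' (c + 1))"

definition Bnd :: "nat list \<Rightarrow> nat list \<Rightarrow> (nat \<Rightarrow> nat \<Rightarrow> nat) \<Rightarrow> bool" where
  "Bnd p v F \<longleftrightarrow> (\<forall>k c. (k, c) \<in> DD v \<longrightarrow> F k c \<le> p ! k + 1)"

lemma DD_k: "(k, c) \<in> DD v \<Longrightarrow> k < length v"
  by (simp add: DD_def)

lemma all_diag:
  "(\<forall>r c. (r, c) \<in> diagram a \<longrightarrow> P r c) \<longleftrightarrow> (\<forall>k c. (k, c) \<in> DD (flat a) \<longrightarrow> P (pos a ! k + 1) c)"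
  using diagram_iff[of _ _ a] by metis

definition kk :: "nat list \<Rightarrow> nat \<Rightarrow> nat" where
  "kk a r = (THE k. k < length (flat a) \<and> r = pos a ! k + 1)"

lemma kk_pos: "k < length (flat a) \<Longrightarrow> kk a (pos a ! k + 1) = k"
  unfolding kk_def by (rule the_equality) (auto simp: pos_eq_iff)

lemma diag_kk: "(r, c) \<in> diagram a \<Longrightarrow> (kk a r, c) \<in> DD (flat a) \<and> r = pos a ! kk a r + 1"
proof -
  assume "(r, c) \<in> diagram a"
  then obtain k where k: "(k, c) \<in> DD (flat a)" "r = pos a ! k + 1" using diagram_iff by blast
  hence "kk a r = k" using kk_pos DD_k by blast
  thus ?thesis using k by simp
qed

lemma dia_k: "(k, c) \<in> DD (flat a) \<Longrightarrow> (pos a ! k + 1, c) \<in> diagram a"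
  using diagram_iff by blast

lemma qk_iff:
  "quasi_key a T \<longleftrightarrow> ZZ a T \<and> KK (flat a) (Phi a T) \<and> Bnd (pos a) (flat a) (Phi a T)"
proof -
  let ?D = "DD (flat a)" and ?p = "pos a"
  have ph: "(k, c) \<in> ?D \<Longrightarrow> Phi a T k c = T (?p ! k + 1) c" for k c
    by (simp add: Phi_def)
  have lt: "(k, c) \<in> ?D \<Longrightarrow> (k', c') \<in> ?D \<Longrightarrow> ?p ! k < ?p ! k' \<longleftrightarrow> k < k'" for k k' c c'
    using pos_less_iff[of k a k'] by (auto dest: DD_k)
  have ne: "(k, c) \<in> ?D \<Longrightarrow> (k', c') \<in> ?D \<Longrightarrow> ?p ! k = ?p ! k' \<longleftrightarrow> k = k'" for k k' c c'
    using pos_eq_iff[of k a k'] by (auto dest: DD_k)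
  have rl: "(k, c) \<in> ?D \<Longrightarrow> row_len a (?p ! k + 1) = flat a ! k" for k c
    using row_len_pos by (auto dest: DD_k)
  have dd: "(k, c) \<in> ?D \<Longrightarrow> (k, c') \<in> ?D \<longleftrightarrow> (?p ! k + 1, c') \<in> diagram a" for k c c'
    using diag_kk[of "?p ! k + 1" c' a] dia_k[of k c' a] kk_pos[of k a] by (auto dest: DD_k)
  have c1: "(\<forall>(r, c) \<in> diagram a. 0 < T r c) \<longleftrightarrow> (\<forall>k c. (k, c) \<in> ?D \<longrightarrow> 0 < Phi a T k c)"
  proof (intro iffI allI impI ballI)
    fix k c assume L: "\<forall>(r, c) \<in> diagram a. 0 < T r c" and h: "(k, c) \<in> ?D"
    show "0 < Phi a T k c" using L dia_k[OF h] ph[OF h] by auto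
  next
    fix x assume R: "\<forall>k c. (k, c) \<in> ?D \<longrightarrow> 0 < Phi a T k c" and h: "x \<in> diagram a"
    obtain r c where x: "x = (r, c)" by (cases x)
    show "case x of (r, c) \<Rightarrow> 0 < T r c"
      using R[rule_format, of "kk a r" c] diag_kk[of r c a] h x ph[of "kk a r" c] by auto
  qed
  have c3: "(\<forall>(r, c) \<in> diagram a. T r c \<le> r) \<longleftrightarrow> (\<forall>k c. (k, c) \<in> ?D \<longrightarrow> Phi a T k c \<le> ?p ! k + 1)"
  proof (intro iffI allI impI ballI)
    fix k c assume L: "\<forall>(r, c) \<in> diagram a. T r c \<le> r" and h: "(k, c) \<in> ?D"
    show "Phi a T k c \<le> ?p ! k + 1" using L dia_k[OF h] ph[OF h] by auto
  next
    fix x assume R: "\<forall>k c. (k, c) \<in> ?D \<longrightarrow> Phi a T k c \<le> ?p ! k + 1" and h: "x \<in> diagram a"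
    obtain r c where x: "x = (r, c)" by (cases x)
    show "case x of (r, c) \<Rightarrow> T r c \<le> r"
      using R[rule_format, of "kk a r" c] diag_kk[of r c a] h x ph[of "kk a r" c] by auto
  qed
  have c2: "(\<forall>r c c'. (r, c) \<in> diagram a \<and> (r, c') \<in> diagram a \<and> c < c' \<longrightarrow> T r c' \<le> T r c)
     \<longleftrightarrow> (\<forall>k c c'. (k, c) \<in> ?D \<and> (k, c') \<in> ?D \<and> c < c' \<longrightarrow> Phi a T k c' \<le> Phi a T k c)"
  proof (intro iffI allI impI)
    fix k c c' assume L: "\<forall>r c c'. (r, c) \<in> diagram a \<and> (r, c') \<in> diagram a \<and> c < c' \<longrightarrow> T r c' \<le> T r c"
      and h: "(k, c) \<in> ?D \<and> (k, c') \<in> ?D \<and> c < c'"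
    show "Phi a T k c' \<le> Phi a T k c"
      using L[rule_format, of "?p ! k + 1" c c'] h dia_k ph by auto
  next
    fix r c c' assume R: "\<forall>k c c'. (k, c) \<in> ?D \<and> (k, c') \<in> ?D \<and> c < c' \<longrightarrow> Phi a T k c' \<le> Phi a T k c"
      and h: "(r, c) \<in> diagram a \<and> (r, c') \<in> diagram a \<and> c < c'"
    then obtain k where k: "(k, c) \<in> ?D" "r = ?p ! k + 1" using diag_kk by blast
    hence "(k, c') \<in> ?D" using dd h by auto
    thus "T r c' \<le> T r c" using R[rule_format, of k c c'] k h ph by auto
  qed
  have c4: "(\<forall>r r' c. (r, c) \<in> diagram a \<and> (r', c) \<in> diagram a \<and> r \<noteq> r' \<longrightarrow> T r c \<noteq> T r' c)
     \<longleftrightarrow> (\<forall>k k' c. (k, c) \<in> ?D \<and> (k', c) \<in> ?D \<and> k \<noteq> k' \<longrightarrow> Phi a T k c \<noteq> Phi a T k' c)"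
  proof (intro iffI allI impI)
    fix k k' c assume L: "\<forall>r r' c. (r, c) \<in> diagram a \<and> (r', c) \<in> diagram a \<and> r \<noteq> r' \<longrightarrow> T r c \<noteq> T r' c"
      and h: "(k, c) \<in> ?D \<and> (k', c) \<in> ?D \<and> k \<noteq> k'"
    show "Phi a T k c \<noteq> Phi a T k' c"
      using L[rule_format, of "?p ! k + 1" c "?p ! k' + 1"] h dia_k ph ne by auto
  next
    fix r r' c assume R: "\<forall>k k' c. (k, c) \<in> ?D \<and> (k', c) \<in> ?D \<and> k \<noteq> k' \<longrightarrow> Phi a T k c \<noteq> Phi a T k' c"
      and h: "(r, c) \<in> diagram a \<and> (r', c) \<in> diagram a \<and> r \<noteq> r'"
    then obtain k k' where k: "(k, c) \<in> ?D" "r = ?p ! k + 1" "(k', c) \<in> ?D" "r' = ?p ! k' + 1"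
      using diag_kk by blast
    have "k \<noteq> k'" using k h by auto
    hence "Phi a T k c \<noteq> Phi a T k' c" using R k by blast
    thus "T r c \<noteq> T r' c" using k ph by auto
  qed
  have c5: "(\<forall>r r'. (r, 1) \<in> diagram a \<and> (r', 1) \<in> diagram a \<and> r < r' \<longrightarrow> T r 1 < T r' 1)
     \<longleftrightarrow> (\<forall>k k'. (k, 1) \<in> ?D \<and> (k', 1) \<in> ?D \<and> k < k' \<longrightarrow> Phi a T k 1 < Phi a T k' 1)"
  proof (intro iffI allI impI)
    fix k k' assume L: "\<forall>r r'. (r, 1) \<in> diagram a \<and> (r', 1) \<in> diagram a \<and> r < r' \<longrightarrow> T r 1 < T r' 1"
      and h: "(k, 1) \<in> ?D \<and> (k', 1) \<in> ?D \<and> k < k'"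
    show "Phi a T k 1 < Phi a T k' 1"
      using L[rule_format, of "?p ! k + 1" "?p ! k' + 1"] h dia_k ph lt by auto
  next
    fix r r' assume R: "\<forall>k k'. (k, 1) \<in> ?D \<and> (k', 1) \<in> ?D \<and> k < k' \<longrightarrow> Phi a T k 1 < Phi a T k' 1"
      and h: "(r, 1) \<in> diagram a \<and> (r', 1) \<in> diagram a \<and> r < r'"
    then obtain k k' where k: "(k, 1) \<in> ?D" "r = ?p ! k + 1" "(k', 1) \<in> ?D" "r' = ?p ! k' + 1"
      using diag_kk by blast
    thus "T r 1 < T r' 1" using R[rule_format, of k k'] h ph lt by auto
  qed
  have c6: "(\<forall>r r' c. (r, c) \<in> diagram a \<and> (r', c) \<in> diagram a \<and> r < r' \<and> T r' c < T r c \<longrightarrow>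
        (r, c + 1) \<in> diagram a \<and> T r' c < T r (c + 1))
     \<longleftrightarrow> (\<forall>k k' c. (k, c) \<in> ?D \<and> (k', c) \<in> ?D \<and> k < k' \<and> Phi a T k' c < Phi a T k c \<longrightarrow>
        (k, c + 1) \<in> ?D \<and> Phi a T k' c < Phi a T k (c + 1))"
  proof (intro iffI allI impI)
    fix k k' c assume L: "\<forall>r r' c. (r, c) \<in> diagram a \<and> (r', c) \<in> diagram a \<and> r < r' \<and> T r' c < T r c \<longrightarrow>
        (r, c + 1) \<in> diagram a \<and> T r' c < T r (c + 1)"
      and h: "(k, c) \<in> ?D \<and> (k', c) \<in> ?D \<and> k < k' \<and> Phi a T k' c < Phi a T k c"
    have "(?p ! k + 1, c + 1) \<in> diagram a \<and> T (?p ! k' + 1) c < T (?p ! k + 1) (c + 1)"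
      using L[rule_format, of "?p ! k + 1" c "?p ! k' + 1"] h dia_k ph lt by auto
    thus "(k, c + 1) \<in> ?D \<and> Phi a T k' c < Phi a T k (c + 1)"
      using dd[of k c "c+1"] h ph by auto
  next
    fix r r' c assume R: "\<forall>k k' c. (k, c) \<in> ?D \<and> (k', c) \<in> ?D \<and> k < k' \<and> Phi a T k' c < Phi a T k c \<longrightarrow>
        (k, c + 1) \<in> ?D \<and> Phi a T k' c < Phi a T k (c + 1)"
      and h: "(r, c) \<in> diagram a \<and> (r', c) \<in> diagram a \<and> r < r' \<and> T r' c < T r c"
    then obtain k k' where k: "(k, c) \<in> ?D" "r = ?p ! k + 1" "(k', c) \<in> ?D" "r' = ?p ! k' + 1"
      using diag_kk by blast
    hence "(k, c + 1) \<in> ?D \<and> Phi a T k' c < Phi a T k (c + 1)"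
      using R[rule_format, of k c k'] h ph lt by auto
    thus "(r, c + 1) \<in> diagram a \<and> T r' c < T r (c + 1)"
      using k dia_k ph by fastforce
  qed
  have c7: "(\<forall>r r' c. r < r' \<and> row_len a r < row_len a r' \<and> (r, c) \<in> diagram a \<and> (r', c + 1) \<in> diagram a \<longrightarrow>
        T r c < T r' (c + 1))
     \<longleftrightarrow> (\<forall>k k' c. k < k' \<and> flat a ! k < flat a ! k' \<and> (k, c) \<in> ?D \<and> (k', c + 1) \<in> ?D \<longrightarrow>
        Phi a T k c < Phi a T k' (c + 1))"
  proof (intro iffI allI impI)
    fix k k' c assume L: "\<forall>r r' c. r < r' \<and> row_len a r < row_len a r' \<and> (r, c) \<in> diagram a \<and> (r', c + 1) \<in> diagram a \<longrightarrow>
        T r c < T r' (c + 1)"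
      and h: "k < k' \<and> flat a ! k < flat a ! k' \<and> (k, c) \<in> ?D \<and> (k', c + 1) \<in> ?D"
    show "Phi a T k c < Phi a T k' (c + 1)"
      using L[rule_format, of "?p ! k + 1" "?p ! k' + 1" c] h dia_k ph lt rl by auto
  next
    fix r r' c assume R: "\<forall>k k' c. k < k' \<and> flat a ! k < flat a ! k' \<and> (k, c) \<in> ?D \<and> (k', c + 1) \<in> ?D \<longrightarrow>
        Phi a T k c < Phi a T k' (c + 1)"
      and h: "r < r' \<and> row_len a r < row_len a r' \<and> (r, c) \<in> diagram a \<and> (r', c + 1) \<in> diagram a"
    then obtain k k' where k: "(k, c) \<in> ?D" "r = ?p ! k + 1" "(k', c + 1) \<in> ?D" "r' = ?p ! k' + 1"
      using diag_kk by blast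
    thus "T r c < T r' (c + 1)" using R[rule_format, of k k' c] h ph lt rl by auto
  qed
  show ?thesis
    unfolding quasi_key_def KK_def Bnd_def ZZ_def c1 c2 c3 c4 c5 c6 c7
    apply (rule iffI)
     apply (elim conjE, intro conjI, assumption+)
    apply (elim conjE, intro conjI, assumption+)
    done
qed



definition zeroD :: "nat list \<Rightarrow> (nat \<Rightarrow> nat \<Rightarrow> nat) \<Rightarrow> bool" where
  "zeroD v F = (\<forall>k c. (k, c) \<notin> DD v \<longrightarrow> F k c = 0)"

definition wF :: "nat \<Rightarrow> nat list \<Rightarrow> (nat \<Rightarrow> 'a::comm_semiring_1) \<Rightarrow> (nat \<Rightarrow> nat \<Rightarrow> nat) \<Rightarrow> 'a" where
  "wF n v x F = (\<Prod>i\<in>{1..n}. x i ^ card {(k, c) \<in> DD v. F k c = i})"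

lemma Phi_zero: "zeroD (flat a) (Phi a T)"
  by (simp add: zeroD_def Phi_def)

lemma Phi_inj: "inj_on (Phi a) {T. ZZ a T}"
proof (rule inj_onI)
  fix T T' assume T: "T \<in> {T. ZZ a T}" and T': "T' \<in> {T. ZZ a T}" and e: "Phi a T = Phi a T'"
  show "T = T'"
  proof (intro ext)
    fix r c
    show "T r c = T' r c"
    proof (cases "(r, c) \<in> diagram a")
      case True
      then obtain k where k: "(k, c) \<in> DD (flat a)" "r = pos a ! k + 1" using diag_kk by blast
      have "Phi a T k c = Phi a T' k c" using e by simp
      thus ?thesis using k by (simp add: Phi_def)
    next
      case False thus ?thesis using T T' by (simp add: ZZ_def)
    qed
  qed
qed

lemma Phi_surj:
  assumes "zeroD (flat a) F"
  shows "\<exists>T. ZZ a T \<and> Phi a T = F"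
proof -
  define T where "T = (\<lambda>r c. if (r, c) \<in> diagram a then F (kk a r) c else 0)"
  have "ZZ a T" by (simp add: ZZ_def T_def)
  moreover have "Phi a T = F"
  proof (intro ext)
    fix k c
    show "Phi a T k c = F k c"
    proof (cases "(k, c) \<in> DD (flat a)")
      case True
      thus ?thesis using dia_k[OF True] kk_pos[OF DD_k[OF True]] by (simp add: Phi_def T_def)
    next
      case False thus ?thesis using assms by (simp add: Phi_def zeroD_def)
    qed
  qed
  ultimately show ?thesis by blast
qed

lemma Phi_image:
  "Phi a ` {T. ZZ a T \<and> Q (Phi a T)} = {F. zeroD (flat a) F \<and> Q F}"
proof
  show "Phi a ` {T. ZZ a T \<and> Q (Phi a T)} \<subseteq> {F. zeroD (flat a) F \<and> Q F}"
    using Phi_zero by blast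
next
  show "{F. zeroD (flat a) F \<and> Q F} \<subseteq> Phi a ` {T. ZZ a T \<and> Q (Phi a T)}"
  proof
    fix F assume "F \<in> {F. zeroD (flat a) F \<and> Q F}"
    then obtain T where "ZZ a T" "Phi a T = F" "Q F" using Phi_surj by blast
    thus "F \<in> Phi a ` {T. ZZ a T \<and> Q (Phi a T)}" by blast
  qed
qed

lemma weight_Phi:
  assumes "ZZ a T"
  shows "tab_weight a x T = wF (length a) (flat a) x (Phi a T)"
proof -
  let ?f = "\<lambda>(k, c). (pos a ! k + 1, c)"
  have inj: "inj_on ?f (DD (flat a))"
    by (rule inj_onI) (clarsimp, metis DD_k pos_eq_iff)
  have "{(r, c) \<in> diagram a. T r c = i} = ?f ` {(k, c) \<in> DD (flat a). Phi a T k c = i}" for i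
  proof
    show "{(r, c) \<in> diagram a. T r c = i} \<subseteq> ?f ` {(k, c) \<in> DD (flat a). Phi a T k c = i}"
    proof
      fix x assume x: "x \<in> {(r, c) \<in> diagram a. T r c = i}"
      obtain r c where rc: "x = (r, c)" by (cases x)
      then obtain k where k: "(k, c) \<in> DD (flat a)" "r = pos a ! k + 1" using x diag_kk by blast
      have "Phi a T k c = i" using k x rc by (simp add: Phi_def)
      thus "x \<in> ?f ` {(k, c) \<in> DD (flat a). Phi a T k c = i}" using k rc
        by (intro image_eqI[of _ _ "(k, c)"]) auto
    qed
  next
    show "?f ` {(k, c) \<in> DD (flat a). Phi a T k c = i} \<subseteq> {(r, c) \<in> diagram a. T r c = i}"
      using dia_k by (auto simp: Phi_def)
  qed
  hence "card {(r, c) \<in> diagram a. T r c = i} = card {(k, c) \<in> DD (flat a). Phi a T k c = i}" for i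
    using card_image[OF inj_on_subset[OF inj]] by (metis (no_types, lifting) case_prodE mem_Collect_eq subsetI)
  thus ?thesis by (simp add: tab_weight_def wF_def)
qed

lemma QKT_eq: "QKT a = {T. ZZ a T \<and> (\<lambda>F. KK (flat a) F \<and> Bnd (pos a) (flat a) F) (Phi a T)}"
  by (simp add: QKT_def qk_iff)

lemma Qpoly_F:
  "Qpoly a x = (\<Sum>F\<in>{F. zeroD (flat a) F \<and> KK (flat a) F \<and> Bnd (pos a) (flat a) F}. wF (length a) (flat a) x F)"
proof -
  have "Qpoly a x = (\<Sum>T\<in>QKT a. wF (length a) (flat a) x (Phi a T))"
    unfolding Qpoly_def by (rule sum.cong) (auto simp: QKT_eq weight_Phi)
  also have "\<dots> = (\<Sum>F\<in>Phi a ` QKT a. wF (length a) (flat a) x F)"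
    by (rule sum.reindex[symmetric, unfolded comp_def]) (rule inj_on_subset[OF Phi_inj], auto simp: QKT_eq)
  also have "Phi a ` QKT a = {F. zeroD (flat a) F \<and> KK (flat a) F \<and> Bnd (pos a) (flat a) F}"
    unfolding QKT_eq using Phi_image[of a "\<lambda>F. KK (flat a) F \<and> Bnd (pos a) (flat a) F"] by simp
  finally show ?thesis .
qed

lemma fc_iff:
  "(\<forall>r. (r, 1) \<in> diagram b \<longrightarrow> T r 1 = r) \<longleftrightarrow> (\<forall>k < length (flat b). Phi b T k 1 = pos b ! k + 1)"
proof -
  have d: "k < length (flat b) \<longleftrightarrow> (k, 1) \<in> DD (flat b)" for k
    using flat_pos[of k b] by (auto simp: DD_def)
  show ?thesis
  proof (intro iffI allI impI)
    fix k assume L: "\<forall>r. (r, 1) \<in> diagram b \<longrightarrow> T r 1 = r" and k: "k < length (flat b)"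
    show "Phi b T k 1 = pos b ! k + 1" using L dia_k[of k 1 b] d[of k] k by (simp add: Phi_def)
  next
    fix r assume R: "\<forall>k < length (flat b). Phi b T k 1 = pos b ! k + 1" and r: "(r, 1) \<in> diagram b"
    then obtain k where k: "(k, 1) \<in> DD (flat b)" "r = pos b ! k + 1" using diag_kk by blast
    have "Phi b T k 1 = pos b ! k + 1" using R k(1) d[of k] by blast
    thus "T r 1 = r" using k by (simp add: Phi_def)
  qed
qed

lemma Qpoly1_F:
  "Qpoly1 b x = (\<Sum>F\<in>{F. zeroD (flat b) F \<and> KK (flat b) F \<and> Bnd (pos b) (flat b) F
      \<and> (\<forall>k < length (flat b). F k 1 = pos b ! k + 1)}. wF (length b) (flat b) x F)"
proof -
  have Q: "QKT1 b = {T. ZZ b T \<and> (\<lambda>F. KK (flat b) F \<and> Bnd (pos b) (flat b) F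
      \<and> (\<forall>k < length (flat b). F k 1 = pos b ! k + 1)) (Phi b T)}"
    unfolding QKT1_def qk_iff fc_iff by simp
  have "Qpoly1 b x = (\<Sum>T\<in>QKT1 b. wF (length b) (flat b) x (Phi b T))"
    unfolding Qpoly1_def by (rule sum.cong) (auto simp: Q weight_Phi)
  also have "\<dots> = (\<Sum>F\<in>Phi b ` QKT1 b. wF (length b) (flat b) x F)"
    by (rule sum.reindex[symmetric, unfolded comp_def]) (rule inj_on_subset[OF Phi_inj], auto simp: Q)
  also have "Phi b ` QKT1 b = {F. zeroD (flat b) F \<and> KK (flat b) F \<and> Bnd (pos b) (flat b) F
      \<and> (\<forall>k < length (flat b). F k 1 = pos b ! k + 1)}"
    unfolding Q using Phi_image[of b "\<lambda>F. KK (flat b) F \<and> Bnd (pos b) (flat b) F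
      \<and> (\<forall>k < length (flat b). F k 1 = pos b ! k + 1)"] by simp
  finally show ?thesis .
qed



lemma filter_take_prefix:
  "filter P (take i xs) = take (length (filter P (take i xs))) (filter P xs)"
proof -
  have h: "filter P xs = filter P (take i xs) @ filter P (drop i xs)"
    by (simp flip: filter_append)
  show ?thesis by (subst h) simp
qed

lemma sum_list_filter0: "sum_list (filter (\<lambda>x. x \<noteq> 0) xs) = sum_list (xs :: nat list)"
  by (induction xs) auto

definition cnt :: "nat list \<Rightarrow> nat \<Rightarrow> nat" where
  "cnt a i = length (filter (\<lambda>x. x \<noteq> 0) (take i a))"

lemma sum_take_cnt: "sum_list (take i a) = sum_list (take (cnt a i) (flat a))"
proof -
  have "sum_list (take i a) = sum_list (filter (\<lambda>x. x \<noteq> 0) (take i a))" by (rule sum_list_filter0[symmetric])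
  also have "\<dots> = sum_list (take (cnt a i) (filter (\<lambda>x. x \<noteq> 0) a))"
    by (subst filter_take_prefix) (simp add: cnt_def)
  finally show ?thesis by (simp add: flat_def)
qed

lemma cnt_le: "cnt a i \<le> length (flat a)"
proof -
  have h: "filter (\<lambda>x. x \<noteq> 0) a = filter (\<lambda>x. x \<noteq> 0) (take i a) @ filter (\<lambda>x. x \<noteq> 0) (drop i a)"
    by (simp flip: filter_append)
  show ?thesis unfolding cnt_def flat_def by (subst h) simp
qed

lemma sum_take_mono: "j \<le> j' \<Longrightarrow> sum_list (take j v) \<le> sum_list (take j' (v :: nat list))"
proof -
  assume "j \<le> j'"
  then obtain d where "j' = j + d" using le_Suc_ex by blast
  thus ?thesis by (simp add: take_add)
qed

lemma sum_take_strict: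
  assumes "\<forall>k < length v. 0 < v ! k" "j < j'" "j' \<le> length v"
  shows "sum_list (take j v) < sum_list (take j' (v :: nat list))"
proof -
  have "sum_list (take (Suc j) v) = sum_list (take j v) + v ! j"
    using assms by (simp add: take_Suc_conv_app_nth)
  moreover have "0 < v ! j" using assms by auto
  moreover have "sum_list (take (Suc j) v) \<le> sum_list (take j' v)"
    using assms by (intro sum_take_mono) auto
  ultimately show ?thesis by linarith
qed

lemma sum_take_le_iff:
  assumes "\<forall>k < length v. 0 < v ! k" "j \<le> length v" "j' \<le> length v"
  shows "sum_list (take j v) \<le> sum_list (take j' (v :: nat list)) \<longleftrightarrow> j \<le> j'"
proof
  assume h: "sum_list (take j v) \<le> sum_list (take j' v)"
  show "j \<le> j'"
  proof (rule ccontr)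
    assume "\<not> j \<le> j'"
    hence "j' < j" by simp
    thus False using sum_take_strict[OF assms(1) \<open>j' < j\<close> assms(2)] h by simp
  qed
qed (rule sum_take_mono)

lemma pos_take: "pos (take i a) = filter (\<lambda>j. j < i) (pos a)"
proof (rule sorted_distinct_set_unique)
  show "sorted (pos (take i a))" "distinct (pos (take i a))"
    using pos_sorted strict_sorted_iff by blast+
  show "sorted (filter (\<lambda>j. j < i) (pos a))" "distinct (filter (\<lambda>j. j < i) (pos a))"
    using sorted_wrt_filter[OF pos_sorted] strict_sorted_iff by blast+
  show "set (pos (take i a)) = set (filter (\<lambda>j. j < i) (pos a))"
    by (auto simp: set_pos)
qed

lemma cnt_card: "cnt a i = card {k. k < length (flat a) \<and> pos a ! k < i}"
proof -
  have "filter (\<lambda>x. x \<noteq> 0) (take i a) = map (nth (take i a)) (pos (take i a))"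
    using map_pos[of "take i a"] by (simp add: flat_def)
  also have "\<dots> = map (nth a) (filter (\<lambda>j. j < i) (pos a))"
    unfolding pos_take by (rule map_cong) auto
  finally have "cnt a i = length (filter (\<lambda>j. j < i) (pos a))" by (simp add: cnt_def)
  thus ?thesis by (simp add: length_filter_conv_card length_pos)
qed

lemma dom_iff:
  assumes len: "length b = length a" and fl: "flat b = flat a"
  shows "dominates b a \<longleftrightarrow> (\<forall>k < length (flat a). pos b ! k \<le> pos a ! k)"
proof -
  let ?v = "flat a" and ?m = "length (flat a)" and ?n = "length a"
  have vpos: "\<forall>k < length ?v. 0 < ?v ! k" using flat_pos by blast
  have "dominates b a \<longleftrightarrow> (\<forall>i \<le> ?n. cnt a i \<le> cnt b i)"
  proof -
    have "sum_list (take i a) \<le> sum_list (take i b) \<longleftrightarrow> cnt a i \<le> cnt b i" for i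
    proof -
      have "sum_list (take i a) \<le> sum_list (take i b) \<longleftrightarrow>
          sum_list (take (cnt a i) ?v) \<le> sum_list (take (cnt b i) ?v)"
        using sum_take_cnt[of i a] sum_take_cnt[of i b] fl by simp
      also have "\<dots> \<longleftrightarrow> cnt a i \<le> cnt b i"
        using sum_take_le_iff[OF vpos cnt_le[of a i]] cnt_le[of b i] fl by simp
      finally show ?thesis .
    qed
    thus ?thesis unfolding dominates_def by simp
  qed
  also have "\<dots> \<longleftrightarrow> (\<forall>k < ?m. pos b ! k \<le> pos a ! k)"
  proof
    assume H: "\<forall>i \<le> ?n. cnt a i \<le> cnt b i"
    show "\<forall>k < ?m. pos b ! k \<le> pos a ! k"
    proof (intro allI impI, rule ccontr)
      fix k assume k: "k < ?m" and c: "\<not> pos b ! k \<le> pos a ! k"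
      let ?i = "pos a ! k + 1"
      have i: "?i \<le> ?n" using pos_lt[OF k] by simp
      have "{..k} \<subseteq> {k'. k' < ?m \<and> pos a ! k' < ?i}"
      proof
        fix k' assume "k' \<in> {..k}"
        hence "k' \<le> k" by simp
        hence "pos a ! k' \<le> pos a ! k" using k pos_less_iff[of k' a k] by (cases "k' = k") auto
        thus "k' \<in> {k'. k' < ?m \<and> pos a ! k' < ?i}" using \<open>k' \<le> k\<close> k by auto
      qed
      hence "k + 1 \<le> cnt a ?i"
      proof -
        have "card {..k} \<le> card {k'. k' < ?m \<and> pos a ! k' < ?i}"
          using \<open>{..k} \<subseteq> _\<close> by (intro card_mono) auto
        thus ?thesis unfolding cnt_card by simp
      qed
      moreover have "{k'. k' < ?m \<and> pos b ! k' < ?i} \<subseteq> {..<k}"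
      proof
        fix k' assume "k' \<in> {k'. k' < ?m \<and> pos b ! k' < ?i}"
        hence "k' < length (flat b)" "pos b ! k' < pos b ! k" using c fl by auto
        thus "k' \<in> {..<k}" using pos_less_iff[of k' b k] k fl by auto
      qed
      hence "cnt b ?i \<le> k"
      proof -
        have "card {k'. k' < ?m \<and> pos b ! k' < ?i} \<le> card {..<k}"
          using \<open>_ \<subseteq> {..<k}\<close> by (intro card_mono) auto
        thus ?thesis unfolding cnt_card fl by simp
      qed
      ultimately show False using H i by fastforce
    qed
  next
    assume H: "\<forall>k < ?m. pos b ! k \<le> pos a ! k"
    show "\<forall>i \<le> ?n. cnt a i \<le> cnt b i"
    proof (intro allI impI)
      fix i
      have "{k. k < ?m \<and> pos a ! k < i} \<subseteq> {k. k < ?m \<and> pos b ! k < i}"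
        using H by fastforce
      thus "cnt a i \<le> cnt b i" unfolding cnt_card fl by (intro card_mono) auto
    qed
  qed
  finally show ?thesis .
qed



lemma KK_row:
  "KK v F \<Longrightarrow> (k, c) \<in> DD v \<Longrightarrow> (k, c') \<in> DD v \<Longrightarrow> c < c' \<Longrightarrow> F k c' \<le> F k c"
  unfolding KK_def by (drule conjunct2, drule conjunct1) blast

lemma KK_col1:
  "KK v F \<Longrightarrow> (k, 1) \<in> DD v \<Longrightarrow> (k', 1) \<in> DD v \<Longrightarrow> k < k' \<Longrightarrow> F k 1 < F k' 1"
  unfolding KK_def by (drule conjunct2, drule conjunct2, drule conjunct2, drule conjunct1) blast

lemma KK_le_first:
  assumes "KK v F" "(k, c) \<in> DD v"
  shows "F k c \<le> F k 1"
proof (cases "c = 1")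
  case True thus ?thesis by simp
next
  case False
  hence h: "(k, 1) \<in> DD v" "1 < c" using assms(2) by (auto simp: DD_def)
  show ?thesis by (rule KK_row[OF assms(1) h(1) assms(2) h(2)])
qed

lemma KK_first_pos: "KK v F \<Longrightarrow> (k, c) \<in> DD v \<Longrightarrow> 0 < F k c"
  unfolding KK_def by (drule conjunct1) simp

lemma DD_first: "k < length (flat a) \<Longrightarrow> (k, 1) \<in> DD (flat a)"
  using flat_pos[of k a] by (auto simp: DD_def)

lemma list_eq_pos:
  assumes "length b = length b'" "pos b = pos b'" "flat b = flat b'"
  shows "b = b'"
proof (rule nth_equalityI)
  show "length b = length b'" by fact
  fix i assume i: "i < length b"
  show "b ! i = b' ! i"
  proof (cases "i \<in> set (pos b)")
    case True
    then obtain k where k: "k < length (pos b)" "i = pos b ! k" by (auto simp: in_set_conv_nth)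
    hence "b ! i = flat b ! k" using flat_nth[of k b] length_pos[of b] by simp
    also have "\<dots> = flat b' ! k" using assms by simp
    also have "\<dots> = b' ! i" using flat_nth[of k b'] length_pos[of b'] k assms by simp
    finally show ?thesis .
  next
    case False
    hence "i \<notin> set (pos b')" using assms by simp
    thus ?thesis using False i assms(1) by (auto simp: set_pos)
  qed
qed

theorem main:
  fixes a :: "nat list" and x :: "nat \<Rightarrow> 'a::comm_semiring_1"
  shows "Qpoly a x =
    (\<Sum>b\<in>{b. length b = length a \<and> dominates b a \<and> flat b = flat a}. Qpoly1 b x)"
proof -
  define v where "v = flat a"
  define n where "n = length a"
  define m where "m = length v"
  define p where "p = pos a"
  define B where "B = {b. length b = length a \<and> dominates b a \<and> flat b = flat a}"
  define Ga where "Ga = {F. zeroD v F \<and> KK v F \<and> Bnd p v F}"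
  define G1 where "G1 = (\<lambda>b. {F. zeroD v F \<and> KK v F \<and> Bnd (pos b) v F \<and> (\<forall>k < m. F k 1 = pos b ! k + 1)})"
  have lenp: "length p = m" unfolding p_def m_def v_def by (rule length_pos)
  have pn: "k < m \<Longrightarrow> p ! k < n" for k unfolding p_def m_def v_def n_def by (rule pos_lt)
  have vpos: "k < m \<Longrightarrow> 0 < v ! k" for k unfolding m_def v_def by (rule flat_pos)
  have D1: "k < m \<Longrightarrow> (k, 1) \<in> DD v" for k unfolding m_def v_def by (rule DD_first)
  have Bdom: "b \<in> B \<Longrightarrow> k < m \<Longrightarrow> pos b ! k \<le> p ! k" for b k
    using dom_iff[of b a] unfolding B_def p_def m_def v_def by auto
  have Blen: "b \<in> B \<Longrightarrow> length (pos b) = m" for b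
    using length_pos[of b] unfolding B_def m_def v_def by simp
  have Q1: "b \<in> B \<Longrightarrow> Qpoly1 b x = (\<Sum>F\<in>G1 b. wF n v x F)" for b
    using Qpoly1_F[of b x] unfolding B_def G1_def n_def v_def m_def by simp
  have Qa: "Qpoly a x = (\<Sum>F\<in>Ga. wF n v x F)"
    using Qpoly_F[of a x] unfolding Ga_def n_def v_def p_def by simp
  have sub: "G1 b \<subseteq> Ga" if b: "b \<in> B" for b
  proof
    fix F assume F: "F \<in> G1 b"
    have "Bnd p v F" unfolding Bnd_def
    proof (intro allI impI)
      fix k c assume kc: "(k, c) \<in> DD v"
      hence k: "k < m" by (simp add: DD_def m_def)
      have "KK v F" using F by (simp add: G1_def)
      hence "F k c \<le> F k 1" using KK_le_first kc by blast
      also have "\<dots> = pos b ! k + 1" using F k by (simp add: G1_def)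
      also have "\<dots> \<le> p ! k + 1" using Bdom[OF b k] by simp
      finally show "F k c \<le> p ! k + 1" .
    qed
    thus "F \<in> Ga" using F by (simp add: G1_def Ga_def)
  qed
  have cover: "Ga \<subseteq> (\<Union>b\<in>B. G1 b)"
  proof
    fix F assume F: "F \<in> Ga"
    have KF: "KK v F" and BF: "Bnd p v F" and ZF: "zeroD v F" using F by (auto simp: Ga_def)
    define q where "q = map (\<lambda>k. F k 1 - 1) [0..<m]"
    have lq: "length q = m" by (simp add: q_def)
    have F1: "k < m \<Longrightarrow> 1 \<le> F k 1" for k using KK_first_pos[OF KF D1] by fastforce
    have qk: "k < m \<Longrightarrow> q ! k = F k 1 - 1" for k by (simp add: q_def)
    have qle: "k < m \<Longrightarrow> q ! k \<le> p ! k" for k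
      using BF D1[of k] qk[of k] unfolding Bnd_def by fastforce
    have qn: "k < m \<Longrightarrow> q ! k < n" for k using qle pn by (meson le_less_trans)
    have qs: "sorted_wrt (<) q"
      unfolding sorted_wrt_iff_nth_less
    proof (intro allI impI)
      fix i j assume ij: "i < j" "j < length q"
      hence "F i 1 < F j 1" using KK_col1[OF KF D1[of i] D1[of j]] lq by simp
      thus "q ! i < q ! j" using ij lq qk F1[of i] by auto
    qed
    hence qd: "distinct q" using strict_sorted_iff by blast
    have theq: "k < m \<Longrightarrow> (THE k'. k' < m \<and> q ! k' = q ! k) = k" for k
      by (rule the_equality) (use nth_eq_iff_index_eq[OF qd] lq in auto)
    define b where "b = map (\<lambda>i. if i \<in> set q then v ! (THE k. k < m \<and> q ! k = i) else 0) [0..<n]"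
    have lb: "length b = n" by (simp add: b_def)
    have bq: "k < m \<Longrightarrow> b ! (q ! k) = v ! k" for k
      using qn[of k] theq[of k] lq by (simp add: b_def)
    have bnz: "i < n \<Longrightarrow> b ! i \<noteq> 0 \<longleftrightarrow> i \<in> set q" for i
    proof
      assume "i < n" "b ! i \<noteq> 0" thus "i \<in> set q" by (simp add: b_def split: if_splits)
    next
      assume "i < n" "i \<in> set q"
      then obtain k where "k < m" "i = q ! k" using lq by (auto simp: in_set_conv_nth)
      thus "b ! i \<noteq> 0" using bq vpos by simp
    qed
    have pb: "pos b = q"
    proof (rule sorted_distinct_set_unique)
      show "sorted (pos b)" "distinct (pos b)" using pos_sorted strict_sorted_iff by blast+
      show "sorted q" "distinct q" using qs strict_sorted_iff by blast+
      show "set (pos b) = set q"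
      proof
        show "set (pos b) \<subseteq> set q" using bnz lb by (auto simp: set_pos)
        show "set q \<subseteq> set (pos b)"
        proof
          fix i assume i: "i \<in> set q"
          then obtain k where "k < m" "i = q ! k" using lq by (auto simp: in_set_conv_nth)
          hence "i < n" using qn by simp
          thus "i \<in> set (pos b)" using bnz i lb by (auto simp: set_pos)
        qed
      qed
    qed
    have fb: "flat b = v"
    proof -
      have "flat b = map (nth b) q" using map_pos[of b] pb by simp
      also have "\<dots> = v" using bq lq by (intro nth_equalityI) (auto simp: m_def)
      finally show ?thesis .
    qed
    have bB: "b \<in> B"
    proof -
      have "dominates b a"
        using dom_iff[of b a] lb fb qle pb unfolding n_def v_def m_def p_def by auto
      thus ?thesis using lb fb unfolding B_def n_def v_def by simp
    qed
    have "F \<in> G1 b"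
    proof -
      have fc: "\<forall>k < m. F k 1 = pos b ! k + 1" using pb qk F1 by fastforce
      have "Bnd (pos b) v F" unfolding Bnd_def
      proof (intro allI impI)
        fix k c assume kc: "(k, c) \<in> DD v"
        hence "k < m" by (simp add: DD_def m_def)
        thus "F k c \<le> pos b ! k + 1" using KK_le_first[OF KF kc] fc by simp
      qed
      thus ?thesis using fc ZF KF by (simp add: G1_def)
    qed
    thus "F \<in> (\<Union>b\<in>B. G1 b)" using bB by blast
  qed
  have Geq: "Ga = (\<Union>b\<in>B. G1 b)" using cover sub by blast
  have finB: "finite B"
  proof (rule finite_subset)
    show "B \<subseteq> {xs. set xs \<subseteq> insert 0 (set a) \<and> length xs = length a}"
    proof
      fix b assume b: "b \<in> B"
      have "set b \<subseteq> insert 0 (set a)"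
      proof
        fix y assume y: "y \<in> set b"
        show "y \<in> insert 0 (set a)"
        proof (cases "y = 0")
          case False
          hence "y \<in> set (flat b)" using y by (simp add: flat_def)
          hence "y \<in> set (flat a)" using b by (simp add: B_def)
          thus ?thesis by (simp add: flat_def)
        qed simp
      qed
      thus "b \<in> {xs. set xs \<subseteq> insert 0 (set a) \<and> length xs = length a}" using b by (simp add: B_def)
    qed
  qed (rule finite_lists_length_eq, simp)
  have finGa: "finite Ga"
  proof -
    define S where "S = {f :: nat \<times> nat \<Rightarrow> nat. \<forall>y. (y \<in> DD v \<longrightarrow> f y \<in> {0..n}) \<and> (y \<notin> DD v \<longrightarrow> f y = 0)}"
    have finD: "finite (DD v)"
    proof (rule finite_subset)
      show "DD v \<subseteq> {..<m} \<times> {..sum_list v}"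
        using elem_le_sum_list[of _ v] by (auto simp: DD_def m_def intro: order.trans)
    qed simp
    have "finite S" unfolding S_def by (rule finite_set_of_finite_funs[OF finD]) simp
    moreover have "Ga \<subseteq> curry ` S"
    proof
      fix F assume F: "F \<in> Ga"
      have "case_prod F \<in> S" unfolding S_def mem_Collect_eq
      proof (intro allI conjI impI)
        fix y assume y: "y \<in> DD v"
        obtain k c where yk: "y = (k, c)" by (cases y)
        hence k: "k < m" using y by (simp add: DD_def m_def)
        have "F k c \<le> p ! k + 1" using F y yk by (simp add: Ga_def Bnd_def)
        thus "case_prod F y \<in> {0..n}" using pn[OF k] yk by simp
      next
        fix y assume "y \<notin> DD v"
        thus "case_prod F y = 0" using F by (cases y) (simp add: Ga_def zeroD_def)
      qed
      thus "F \<in> curry ` S" by (intro image_eqI[of _ _ "case_prod F"]) auto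
    qed
    ultimately show ?thesis using finite_subset by blast
  qed
  have disj: "\<forall>b\<in>B. \<forall>b'\<in>B. b \<noteq> b' \<longrightarrow> G1 b \<inter> G1 b' = {}"
  proof (intro ballI impI)
    fix b b' assume b: "b \<in> B" and b': "b' \<in> B" and ne: "b \<noteq> b'"
    show "G1 b \<inter> G1 b' = {}"
    proof (rule ccontr)
      assume "G1 b \<inter> G1 b' \<noteq> {}"
      then obtain F where F: "F \<in> G1 b" "F \<in> G1 b'" by blast
      have "pos b = pos b'"
      proof (rule nth_equalityI)
        show "length (pos b) = length (pos b')" using Blen b b' by simp
        fix k assume "k < length (pos b)"
        hence "k < m" using Blen b by simp
        thus "pos b ! k = pos b' ! k" using F by (simp add: G1_def)
      qed
      hence "b = b'" using list_eq_pos[of b b'] b b' by (simp add: B_def)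
      thus False using ne by simp
    qed
  qed
  have "(\<Sum>b\<in>B. Qpoly1 b x) = (\<Sum>b\<in>B. \<Sum>F\<in>G1 b. wF n v x F)"
    using Q1 by simp
  also have "\<dots> = (\<Sum>F\<in>(\<Union>b\<in>B. G1 b). wF n v x F)"
  proof (rule sum.UNION_disjoint[symmetric])
    show "finite B" by (rule finB)
    show "\<forall>b\<in>B. finite (G1 b)" using finGa sub by (blast intro: finite_subset)
    show "\<forall>b\<in>B. \<forall>b'\<in>B. b \<noteq> b' \<longrightarrow> G1 b \<inter> G1 b' = {}" by (rule disj)
  qed
  also have "\<dots> = Qpoly a x" using Qa Geq by simp
  finally show ?thesis unfolding B_def by simp
qed


theorem lemma2p20:
  fixes a :: "nat list" and x :: "nat \<Rightarrow> 'a::comm_semiring_1"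
  shows "Qpoly a x =
    (\<Sum>b\<in>{b. length b = length a \<and> dominates b a \<and> flat b = flat a}. Qpoly1 b x)"
  by (rule main)

end
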